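(* The projection $S_{12}$ consists precisely of the points $(d_1,d_2)\in\mathbb{R}^2$ such that $d_1\ge0$, $d_2\ge0$ and $d_1+d_2\le 3/4$.
   Context: For a finite graph $G$ and a $k$-vertex graph $H$, $d(H,G)$ is the probability that a uniformly random $k$-element subset of $V(G)$ induces a subgraph isomorphic to $H$. For $k\in\{0,1,2,3\}$ let $H_k$ be the 3-vertex graph with exactly $k$ edges. Let $S\subseteq\mathbb{R}^4$ be the set of all $(d_0,d_1,d_2,d_3)$ such that for every $\varepsilon>0$ and every $n\in\mathbb{N}$ there is a graph $G$ with at least $n$ vertices satisfying $|d(H_k,G)-d_k|\le\varepsilon$ for $k=0,1,2,3$. For $i<j$, $S_{ij}=\{(d_i,d_j):(d_0,d_1,d_2,d_3)\in S\}$. *)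

theory Defs
  imports Complex_Main
begin

text \<open>A finite simple graph is represented (up to isomorphism) by a vertex set
  {0..<m} together with a symmetric, irreflexive adjacency relation E.\<close>

definition simple_graph :: "(nat \<Rightarrow> nat \<Rightarrow> bool) \<Rightarrow> bool" where
  "simple_graph E \<longleftrightarrow> (\<forall>u v. E u v \<longleftrightarrow> E v u) \<and> (\<forall>v. \<not> E v v)"

definition induces_iso :: "(nat \<Rightarrow> nat \<Rightarrow> bool) \<Rightarrow> nat \<Rightarrow> (nat \<Rightarrow> nat \<Rightarrow> bool) \<Rightarrow> nat set \<Rightarrow> bool" where
  "induces_iso H k E A \<longleftrightarrow>
     (\<exists>f. bij_betw f {0..<k} A \<and> (\<forall>i\<in>{0..<k}. \<forall>j\<in>{0..<k}. H i j \<longleftrightarrow> E (f i) (f j)))"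

definition ind_density :: "(nat \<Rightarrow> nat \<Rightarrow> bool) \<Rightarrow> nat \<Rightarrow> nat \<Rightarrow> (nat \<Rightarrow> nat \<Rightarrow> bool) \<Rightarrow> real" where
  "ind_density H k m E =
     real (card {A. A \<subseteq> {0..<m} \<and> card A = k \<and> induces_iso H k E A}) / real (m choose k)"

text \<open>H_k: the 3-vertex graph on {0,1,2} with exactly k edges
  (edges {0,1}, {0,2}, {1,2} added in this order).\<close>

definition Hk :: "nat \<Rightarrow> nat \<Rightarrow> nat \<Rightarrow> bool" where
  "Hk k i j \<longleftrightarrow> i \<noteq> j \<and> i < 3 \<and> j < 3 \<and> i + j \<le> k"

definition S_set :: "(real \<times> real \<times> real \<times> real) set" where
  "S_set = {(d0, d1, d2, d3). \<forall>\<epsilon>>0. \<forall>n::nat. \<exists>m E. m \<ge> n \<and> simple_graph E \<and>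
      \<bar>ind_density (Hk 0) 3 m E - d0\<bar> \<le> \<epsilon> \<and>
      \<bar>ind_density (Hk 1) 3 m E - d1\<bar> \<le> \<epsilon> \<and>
      \<bar>ind_density (Hk 2) 3 m E - d2\<bar> \<le> \<epsilon> \<and>
      \<bar>ind_density (Hk 3) 3 m E - d3\<bar> \<le> \<epsilon>}"

definition S12 :: "(real \<times> real) set" where
  "S12 = {(d1, d2). \<exists>d0 d3. (d0, d1, d2, d3) \<in> S_set}"

end

theory Submission
  imports Defs "HOL-Analysis.Analysis"
begin

definition ec :: "(nat \<Rightarrow> nat \<Rightarrow> bool) \<Rightarrow> nat \<Rightarrow> nat \<Rightarrow> nat \<Rightarrow> nat" where
  "ec E x y z = of_bool (E x y) + of_bool (E x z) + of_bool (E y z)"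

definition dst :: "nat \<Rightarrow> nat \<Rightarrow> nat \<Rightarrow> bool" where
  "dst x y z \<longleftrightarrow> x \<noteq> y \<and> x \<noteq> z \<and> y \<noteq> z"

definition S3 :: "nat \<Rightarrow> (nat \<Rightarrow> nat \<Rightarrow> nat \<Rightarrow> real) \<Rightarrow> real" where
  "S3 m F = (\<Sum>x<m. \<Sum>y<m. \<Sum>z<m. F x y z)"

lemma S3_swap12: "S3 m F = S3 m (\<lambda>x y z. F y x z)"
  unfolding S3_def by (rule sum.swap)

lemma S3_swap23: "S3 m F = S3 m (\<lambda>x y z. F x z y)"
  unfolding S3_def by (rule sum.cong[OF refl], rule sum.swap)

lemma S3_add: "S3 m (\<lambda>x y z. F x y z + G x y z) = S3 m F + S3 m G"
  unfolding S3_def by (simp add: sum.distrib)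

lemma S3_cong: "(\<And>x y z. x < m \<Longrightarrow> y < m \<Longrightarrow> z < m \<Longrightarrow> F x y z = G x y z) \<Longrightarrow> S3 m F = S3 m G"
  unfolding S3_def by (intro sum.cong refl) auto

lemma S3_mono: "(\<And>x y z. x < m \<Longrightarrow> y < m \<Longrightarrow> z < m \<Longrightarrow> F x y z \<le> G x y z) \<Longrightarrow> S3 m F \<le> S3 m G"
  unfolding S3_def by (intro sum_mono) auto

lemma S3_cmult: "S3 m (\<lambda>x y z. c * F x y z) = c * S3 m F"
  unfolding S3_def by (simp add: sum_distrib_left)

definition ordw :: "nat \<Rightarrow> nat \<Rightarrow> nat \<Rightarrow> real" where
  "ordw x y z = of_bool (x < y \<and> y < z)"

lemma S3_sym6:
  assumes sym1: "\<And>x y z. h x y z = h y x z" and sym2: "\<And>x y z. h x y z = h x z y"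
    and zero: "\<And>x y z. \<not> dst x y z \<Longrightarrow> h x y z = 0"
  shows "S3 m h = 6 * S3 m (\<lambda>x y z. ordw x y z * h x y z)"
proof -
  let ?O = "\<lambda>x y z. ordw x y z * h x y z"
  have pw: "h x y z = ordw x y z * h x y z + ordw x z y * h x y z + ordw y x z * h x y z
     + ordw y z x * h x y z + ordw z x y * h x y z + ordw z y x * h x y z" for x y z
  proof (cases "dst x y z")
    case True
    then show ?thesis unfolding ordw_def dst_def
      by (cases "x < y"; cases "y < z"; cases "x < z") (auto simp: algebra_simps)
  next
    case False
    then show ?thesis using zero by simp
  qed
  have e1: "S3 m (\<lambda>x y z. ordw x z y * h x y z) = S3 m ?O"
    by (subst S3_swap23) (metis sym2)
  have e2: "S3 m (\<lambda>x y z. ordw y x z * h x y z) = S3 m ?O"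
    by (subst S3_swap12) (metis sym1)
  have e3: "S3 m (\<lambda>x y z. ordw y z x * h x y z) = S3 m ?O"
    apply (subst S3_swap12) apply (subst S3_swap23) by (metis sym1 sym2)
  have e4: "S3 m (\<lambda>x y z. ordw z x y * h x y z) = S3 m ?O"
    apply (subst S3_swap23) apply (subst S3_swap12) by (metis sym1 sym2)
  have e5: "S3 m (\<lambda>x y z. ordw z y x * h x y z) = S3 m ?O"
    apply (subst S3_swap12) apply (subst S3_swap23) apply (subst S3_swap12) by (metis sym1 sym2)
  have "S3 m h = S3 m (\<lambda>x y z. ordw x y z * h x y z + ordw x z y * h x y z + ordw y x z * h x y z
     + ordw y z x * h x y z + ordw z x y * h x y z + ordw z y x * h x y z)"
    by (rule S3_cong) (rule pw)
  also have "\<dots> = 6 * S3 m ?O"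
    by (simp only: S3_add e1 e2 e3 e4 e5)
  finally show ?thesis .
qed


lemma ec_perm:
  assumes sym: "\<And>u v. E u v = E v u"
    and "{a,b,c} = {x,y,z}" "dst a b c" "dst x y z"
  shows "ec E a b c = ec E x y z"
proof -
  have "a \<in> {x,y,z}" "b \<in> {x,y,z}" "c \<in> {x,y,z}" using assms(2) by auto
  then show ?thesis using assms(3,4) unfolding ec_def dst_def
    by (auto simp: sym[of x y] sym[of x z] sym[of y z])
qed

lemma Hk_count: "k \<le> 3 \<Longrightarrow> of_bool (Hk k 0 1) + of_bool (Hk k 0 2) + of_bool (Hk k 1 2) = (k::nat)"
  unfolding Hk_def by (cases k) (auto, presburger?)

lemma iso_imp_ec:
  assumes sg: "simple_graph E" and k: "k \<le> 3" and d: "dst x y z"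
    and iso: "induces_iso (Hk k) 3 E {x,y,z}"
  shows "ec E x y z = k"
proof -
  from iso obtain f where bij: "bij_betw f {0..<3} {x,y,z}"
    and hom: "\<forall>i\<in>{0..<3}. \<forall>j\<in>{0..<3}. Hk k i j \<longleftrightarrow> E (f i) (f j)"
    unfolding induces_iso_def by blast
  have sym: "\<And>u v. E u v = E v u" using sg unfolding simple_graph_def by blast
  have img: "f ` {0..<3} = {x,y,z}" using bij by (simp add: bij_betw_def)
  have "{0..<3::nat} = {0,1,2}" by auto
  then have img2: "{f 0, f 1, f 2} = {x,y,z}" using img by simp
  have inj: "inj_on f {0..<3}" using bij by (simp add: bij_betw_def)
  have "f 0 \<noteq> f 1" "f 0 \<noteq> f 2" "f 1 \<noteq> f 2"
    using inj_onD[OF inj, of 0 1] inj_onD[OF inj, of 0 2] inj_onD[OF inj, of 1 2] by auto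
  then have dd: "dst (f 0) (f 1) (f 2)" by (simp add: dst_def)
  have "ec E (f 0) (f 1) (f 2) = of_bool (Hk k 0 1) + of_bool (Hk k 0 2) + of_bool (Hk k 1 2)"
    using hom unfolding ec_def by simp
  also have "\<dots> = k" using Hk_count[OF k] .
  finally show ?thesis using ec_perm[OF sym img2 dd d] by simp
qed

lemma ec_imp_iso_aux:
  assumes sg: "simple_graph E" and k: "k \<le> 3"
    and set: "{a,b,c} = {x,y,z}" and d: "dst a b c"
    and e1: "E a b \<longleftrightarrow> 1 \<le> k" and e2: "E a c \<longleftrightarrow> 2 \<le> k" and e3: "E b c \<longleftrightarrow> 3 \<le> k"
  shows "induces_iso (Hk k) 3 E {x,y,z}"
proof -
  have sym: "\<And>u v. E u v = E v u" and irr: "\<And>v. \<not> E v v"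
    using sg unfolding simple_graph_def by blast+
  define f where "f = (\<lambda>i::nat. if i = 0 then a else if i = 1 then b else c)"
  have "{0..<3::nat} = {0,1,2}" by auto
  have "bij_betw f {0..<3} {x,y,z}"
    unfolding bij_betw_def inj_on_def f_def using set d
    by (auto simp: dst_def \<open>{0..<3::nat} = {0,1,2}\<close>)
  moreover have "\<forall>i\<in>{0..<3}. \<forall>j\<in>{0..<3}. Hk k i j \<longleftrightarrow> E (f i) (f j)"
    unfolding \<open>{0..<3::nat} = {0,1,2}\<close> f_def Hk_def using e1 e2 e3 irr sym[of a b] sym[of a c] sym[of b c]
    by auto
  ultimately show ?thesis unfolding induces_iso_def by blast
qed

lemma ec_imp_iso:
  assumes sg: "simple_graph E" and k: "k \<le> 3" and d: "dst x y z"
    and ec: "ec E x y z = k"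
  shows "induces_iso (Hk k) 3 E {x,y,z}"
proof -
  have sym: "\<And>u v. E u v = E v u" using sg unfolding simple_graph_def by blast
  have dd: "dst x z y" "dst y z x" "dst y x z" "dst z x y" using d unfolding dst_def by auto
  have s1: "{x,z,y} = {x,y,z}" "{y,z,x} = {x,y,z}" "{y,x,z} = {x,y,z}" "{z,x,y} = {x,y,z}" by auto
  show ?thesis
  proof (cases "E x y"; cases "E x z"; cases "E y z")
    assume "E x y" "E x z" "E y z" then show ?thesis
      using ec by (intro ec_imp_iso_aux[OF sg k _ d]) (auto simp: ec_def)
  next
    assume "E x y" "E x z" "\<not> E y z" then show ?thesis
      using ec by (intro ec_imp_iso_aux[OF sg k _ d]) (auto simp: ec_def)
  next
    assume "E x y" "\<not> E x z" "E y z" then show ?thesis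
      using ec sym[of x y] by (intro ec_imp_iso_aux[OF sg k s1(3) dd(3)]) (auto simp: ec_def)
  next
    assume "E x y" "\<not> E x z" "\<not> E y z" then show ?thesis
      using ec by (intro ec_imp_iso_aux[OF sg k _ d]) (auto simp: ec_def)
  next
    assume "\<not> E x y" "E x z" "E y z" then show ?thesis
      using ec sym[of x z] sym[of y z] by (intro ec_imp_iso_aux[OF sg k s1(4) dd(4)]) (auto simp: ec_def)
  next
    assume "\<not> E x y" "E x z" "\<not> E y z" then show ?thesis
      using ec sym[of y z] by (intro ec_imp_iso_aux[OF sg k s1(1) dd(1)]) (auto simp: ec_def)
  next
    assume "\<not> E x y" "\<not> E x z" "E y z" then show ?thesis
      using ec sym[of x y] sym[of x z] by (intro ec_imp_iso_aux[OF sg k s1(2) dd(2)]) (auto simp: ec_def)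
  next
    assume "\<not> E x y" "\<not> E x z" "\<not> E y z" then show ?thesis
      using ec by (intro ec_imp_iso_aux[OF sg k _ d]) (auto simp: ec_def)
  qed
qed

lemma iso_iff_ec:
  assumes "simple_graph E" "k \<le> 3" "dst x y z"
  shows "induces_iso (Hk k) 3 E {x,y,z} \<longleftrightarrow> ec E x y z = k"
  using iso_imp_ec[OF assms] ec_imp_iso[OF assms] by blast


lemma choose2_real: "real (m choose 2) * 2 = real m * (real m - 1)"
proof (induction m)
  case 0 then show ?case by simp
next
  case (Suc m)
  have "Suc m choose 2 = (m choose 1) + (m choose 2)"
    by (metis Suc_1 binomial_Suc_Suc)
  then show ?case using Suc by (simp add: algebra_simps)
qed

lemma choose3_real: "real (m choose 3) * 6 = real m * (real m - 1) * (real m - 2)"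
proof (induction m)
  case 0 then show ?case by simp
next
  case (Suc m)
  have "Suc m choose 3 = (m choose 2) + (m choose 3)"
  proof -
    have "(3::nat) = Suc 2" by simp
    then show ?thesis by (simp only: binomial_Suc_Suc)
  qed
  then have "real (Suc m choose 3) * 6 = real (m choose 2) * 2 * 3 + real (m choose 3) * 6"
    by simp
  also have "\<dots> = real m * (real m - 1) * 3 + real m * (real m - 1) * (real m - 2)"
    using Suc choose2_real[of m] by simp
  finally show ?case by (simp add: algebra_simps)
qed

lemma sort3: "dst x y z \<Longrightarrow> \<exists>a b c. a < b \<and> b < c \<and> {a,b,c} = {x,y,(z::nat)}"
  unfolding dst_def
  apply (cases "x < y"; cases "y < z"; cases "x < z")
  apply (auto simp: insert_commute)
  apply (metis insert_commute linorder_neqE_nat)+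
  done

lemma sorted_inj:
  assumes "{x,y,z} = {a,b,c}" "x < y" "y < z" "a < b" "b < (c::nat)"
  shows "x = a \<and> y = b \<and> z = c"
proof -
  have "x \<in> {a,b,c}" "y \<in> {a,b,c}" "z \<in> {a,b,c}" "a \<in> {x,y,z}" "b \<in> {x,y,z}" "c \<in> {x,y,z}"
    using assms(1) by blast+
  then show ?thesis using assms(2-5) by auto
qed

lemma S3_card: "S3 m (\<lambda>x y z. of_bool (P x y z)) = real (card {(x,y,z). x<m \<and> y<m \<and> z<m \<and> P x y z})"
proof -
  have "S3 m (\<lambda>x y z. of_bool (P x y z)) = (\<Sum>t\<in>{..<m} \<times> {..<m} \<times> {..<m}. of_bool (case t of (x,y,z) \<Rightarrow> P x y z))"
    unfolding S3_def by (simp add: sum.cartesian_product case_prod_beta del: sum_of_bool_eq)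
  also have "\<dots> = real (card ({..<m} \<times> {..<m} \<times> {..<m} \<inter> {t. case t of (x,y,z) \<Rightarrow> P x y z}))"
    by (rule sum_of_bool_eq) (auto intro: finite_cartesian_product)
  also have "{..<m} \<times> {..<m} \<times> {..<m} \<inter> {t. case t of (x,y,z) \<Rightarrow> P x y z} = {(x,y,z). x<m \<and> y<m \<and> z<m \<and> P x y z}"
    by auto
  finally show ?thesis .
qed

lemma card_sets:
  assumes sg: "simple_graph E" and k: "k \<le> 3"
  shows "real (card {A. A \<subseteq> {0..<m} \<and> card A = 3 \<and> induces_iso (Hk k) 3 E A})
       = S3 m (\<lambda>x y z. ordw x y z * of_bool (ec E x y z = k))"
proof -
  define Ss where "Ss = {(x,y,z). x<m \<and> y<m \<and> z<m \<and> (x < y \<and> y < z \<and> ec E x y z = k)}"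
  define g where "g = (\<lambda>(x::nat,y::nat,z::nat). {x,y,z})"
  have inj: "inj_on g Ss"
    unfolding inj_on_def Ss_def g_def using sorted_inj by auto
  have img: "g ` Ss = {A. A \<subseteq> {0..<m} \<and> card A = 3 \<and> induces_iso (Hk k) 3 E A}"
  proof
    show "g ` Ss \<subseteq> {A. A \<subseteq> {0..<m} \<and> card A = 3 \<and> induces_iso (Hk k) 3 E A}"
    proof
      fix A assume "A \<in> g ` Ss"
      then obtain x y z where A: "A = {x,y,z}" and xyz: "x < y" "y < z" "z < m" "ec E x y z = k"
        unfolding Ss_def g_def by auto
      have d: "dst x y z" using xyz unfolding dst_def by auto
      show "A \<in> {A. A \<subseteq> {0..<m} \<and> card A = 3 \<and> induces_iso (Hk k) 3 E A}"
        using A xyz iso_iff_ec[OF sg k d] by (auto simp: card_insert_if)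
    qed
  next
    show "{A. A \<subseteq> {0..<m} \<and> card A = 3 \<and> induces_iso (Hk k) 3 E A} \<subseteq> g ` Ss"
    proof
      fix A assume "A \<in> {A. A \<subseteq> {0..<m} \<and> card A = 3 \<and> induces_iso (Hk k) 3 E A}"
      then have sub: "A \<subseteq> {0..<m}" and c3: "card A = 3" and iso: "induces_iso (Hk k) 3 E A" by auto
      obtain x y z where "A = {x,y,z}" "dst x y z" using c3 unfolding card_3_iff dst_def by blast
      then obtain a b c where abc: "a < b" "b < c" "A = {a,b,c}" using sort3 by metis
      have d: "dst a b c" using abc unfolding dst_def by auto
      have "ec E a b c = k" using iso_iff_ec[OF sg k d] iso abc by simp
      moreover have "c < m" using sub abc by auto
      ultimately have "(a,b,c) \<in> Ss" using abc unfolding Ss_def by auto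
      then show "A \<in> g ` Ss" using abc unfolding g_def by (auto intro!: image_eqI[of _ _ "(a,b,c)"])
    qed
  qed
  have "real (card {A. A \<subseteq> {0..<m} \<and> card A = 3 \<and> induces_iso (Hk k) 3 E A}) = real (card Ss)"
    using card_image[OF inj] img by simp
  also have "\<dots> = S3 m (\<lambda>x y z. of_bool (x < y \<and> y < z \<and> ec E x y z = k))"
    unfolding Ss_def by (rule S3_card[symmetric])
  also have "\<dots> = S3 m (\<lambda>x y z. ordw x y z * of_bool (ec E x y z = k))"
    by (rule S3_cong) (simp add: ordw_def)
  finally show ?thesis .
qed

definition T :: "nat \<Rightarrow> nat \<Rightarrow> (nat \<Rightarrow> nat \<Rightarrow> bool) \<Rightarrow> real" where
  "T k m E = S3 m (\<lambda>x y z. of_bool (dst x y z \<and> ec E x y z = k))"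

lemma ec_sym:
  assumes "\<And>u v. E u v = E v u"
  shows "ec E x y z = ec E y x z" "ec E x y z = ec E x z y"
  unfolding ec_def using assms by (auto simp: algebra_simps)

lemma T_eq:
  assumes sg: "simple_graph E" and k: "k \<le> 3"
  shows "T k m E = 6 * real (card {A. A \<subseteq> {0..<m} \<and> card A = 3 \<and> induces_iso (Hk k) 3 E A})"
proof -
  have sym: "\<And>u v. E u v = E v u" using sg unfolding simple_graph_def by blast
  have "T k m E = 6 * S3 m (\<lambda>x y z. ordw x y z * of_bool (dst x y z \<and> ec E x y z = k))"
    unfolding T_def
  proof (rule S3_sym6)
    show "of_bool (dst x y z \<and> ec E x y z = k) = (of_bool (dst y x z \<and> ec E y x z = k)::real)" for x y z
      using ec_sym[where E=E and x=x and y=y and z=z, OF sym] by (auto simp: dst_def)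
    show "of_bool (dst x y z \<and> ec E x y z = k) = (of_bool (dst x z y \<and> ec E x z y = k)::real)" for x y z
      using ec_sym[where E=E and x=x and y=y and z=z, OF sym] by (auto simp: dst_def)
    show "\<not> dst x y z \<Longrightarrow> (of_bool (dst x y z \<and> ec E x y z = k)::real) = 0" for x y z
      by simp
  qed
  also have "S3 m (\<lambda>x y z. ordw x y z * of_bool (dst x y z \<and> ec E x y z = k))
       = S3 m (\<lambda>x y z. ordw x y z * of_bool (ec E x y z = k))"
    by (rule S3_cong) (auto simp: ordw_def dst_def)
  finally show ?thesis using card_sets[OF sg k] by simp
qed

lemma density_eq:
  assumes sg: "simple_graph E" and k: "k \<le> 3"
  shows "ind_density (Hk k) 3 m E = T k m E / (real m * (real m - 1) * (real m - 2))"
proof -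
  have "real m * (real m - 1) * (real m - 2) = 6 * real (m choose 3)"
    using choose3_real[of m] by (simp add: algebra_simps)
  then show ?thesis unfolding ind_density_def using T_eq[OF sg k, of m]
    by simp
qed


definition Mw :: "(nat \<Rightarrow> nat \<Rightarrow> bool) \<Rightarrow> nat \<Rightarrow> nat \<Rightarrow> nat \<Rightarrow> real" where
  "Mw E x y z = of_bool (dst x y z) * of_bool (E x y \<noteq> E x z)"

lemma inner_bound:
  assumes x: "x < m"
  shows "(\<Sum>y<m. \<Sum>z<m. Mw E x y z) \<le> (real m - 1)^2 / 2"
proof -
  define A where "A = {..<m} - {x}"
  define e where "e = (\<lambda>y. (of_bool (E x y)::real))"
  have fA: "finite A" unfolding A_def by simp
  have cA: "real (card A) = real m - 1" unfolding A_def using x by (simp add: of_nat_diff)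
  have "(\<Sum>y<m. \<Sum>z<m. Mw E x y z) = (\<Sum>y<m. of_bool (y \<noteq> x) * (\<Sum>z<m. of_bool (z \<noteq> x) * (e y + e z - 2 * e y * e z)))"
  proof -
    have pw: "Mw E x y z = of_bool (y \<noteq> x) * (of_bool (z \<noteq> x) * (e y + e z - 2*e y*e z))" for y z
      unfolding Mw_def e_def dst_def by (cases "E x y"; cases "E x z") auto
    show ?thesis by (simp only: pw sum_distrib_left)
  qed
  also have "\<dots> = (\<Sum>y\<in>A. \<Sum>z\<in>A. (e y + e z - 2 * e y * e z))"
  proof -
    have gen: "(\<Sum>y<m. of_bool (y \<noteq> x) * g y) = (\<Sum>y\<in>A. g y)" for g :: "nat \<Rightarrow> real"
    proof -
      have "(\<Sum>y<m. of_bool (y \<noteq> x) * g y) = of_bool (x \<noteq> x) * g x + (\<Sum>y\<in>A. of_bool (y \<noteq> x) * g y)"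
        unfolding A_def using x by (subst sum.remove[of _ x]) (auto simp del: sum_of_bool_mult_eq)
      also have "\<dots> = (\<Sum>y\<in>A. g y)"
        by (simp del: sum_of_bool_mult_eq) (intro sum.cong refl, auto simp: A_def)
      finally show ?thesis .
    qed
    show ?thesis by (simp only: gen)
  qed
  also have "\<dots> = real (card A) * sum e A + real (card A) * sum e A - 2 * sum e A * sum e A"
    by (simp add: sum.distrib sum_subtractf sum_distrib_left sum_distrib_right algebra_simps)
  also have "\<dots> \<le> real (card A) ^ 2 / 2"
  proof -
    have "0 \<le> (real (card A) - 2 * sum e A)^2" by simp
    then show ?thesis by (simp add: power2_eq_square algebra_simps)
  qed
  finally show ?thesis using cA by simp
qed

lemma upper_T:
  assumes sg: "simple_graph E"
  shows "T 1 m E + T 2 m E \<le> 3/4 * real m * (real m - 1)^2"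
proof -
  have sym: "\<And>u v. E u v = E v u" using sg unfolding simple_graph_def by blast
  have pw: "2 * (of_bool (dst x y z \<and> ec E x y z = 1) + of_bool (dst x y z \<and> ec E x y z = 2))
      = Mw E x y z + Mw E y x z + Mw E z x y" for x y z
    unfolding Mw_def ec_def dst_def using sym[of x y] sym[of x z] sym[of y z]
    by (cases "E x y"; cases "E x z"; cases "E y z") auto
  have "2 * (T 1 m E + T 2 m E) = S3 m (\<lambda>x y z. Mw E x y z + Mw E y x z + Mw E z x y)"
    unfolding T_def S3_cmult[symmetric] S3_add[symmetric] using pw by (intro S3_cong) simp
  also have "\<dots> = S3 m (Mw E) + S3 m (\<lambda>x y z. Mw E y x z) + S3 m (\<lambda>x y z. Mw E z x y)"
    by (simp only: S3_add)
  also have "S3 m (\<lambda>x y z. Mw E y x z) = S3 m (Mw E)"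
    by (subst S3_swap12) (simp add: Mw_def dst_def)
  also have "S3 m (\<lambda>x y z. Mw E z x y) = S3 m (Mw E)"
    apply (subst S3_swap23) apply (subst S3_swap12) by (simp add: Mw_def dst_def conj_commute)
  also have "S3 m (Mw E) \<le> (\<Sum>x<m. (real m - 1)^2 / 2)"
    unfolding S3_def by (intro sum_mono inner_bound) simp
  finally have "2 * (T 1 m E + T 2 m E) \<le> 3 * (real m * (real m - 1)^2 / 2)" by simp
  then show ?thesis by simp
qed


definition cw :: "(nat \<Rightarrow> real) \<Rightarrow> nat \<Rightarrow> real" where
  "cw w j = (\<Sum>i<j. w i)"

definition bd :: "(nat \<Rightarrow> real) \<Rightarrow> nat \<Rightarrow> nat \<Rightarrow> nat" where
  "bd w m j = nat \<lfloor>real m * cw w j\<rfloor>"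

definition pt :: "(nat \<Rightarrow> real) \<Rightarrow> nat \<Rightarrow> nat \<Rightarrow> nat" where
  "pt w m u = (if u < bd w m 1 then 0 else if u < bd w m 2 then 1 else if u < bd w m 3 then 2
     else if u < bd w m 4 then 3 else 4)"

definition nn :: "(nat \<Rightarrow> real) \<Rightarrow> nat \<Rightarrow> nat \<Rightarrow> nat" where
  "nn w m i = bd w m (Suc i) - bd w m i"

definition EG :: "(nat \<Rightarrow> nat \<Rightarrow> bool) \<Rightarrow> (nat \<Rightarrow> real) \<Rightarrow> nat \<Rightarrow> nat \<Rightarrow> nat \<Rightarrow> bool" where
  "EG P w m u v \<longleftrightarrow> u \<noteq> v \<and> P (pt w m u) (pt w m v)"

definition wok :: "(nat \<Rightarrow> real) \<Rightarrow> bool" where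
  "wok w \<longleftrightarrow> (\<forall>i. 0 \<le> w i) \<and> cw w 5 = 1"

lemma cw_mono: "wok w \<Longrightarrow> j \<le> j' \<Longrightarrow> cw w j \<le> cw w j'"
  unfolding cw_def wok_def by (intro sum_mono2) auto

lemma cw_nonneg: "wok w \<Longrightarrow> 0 \<le> cw w j"
  unfolding cw_def wok_def by (intro sum_nonneg) auto

lemma bd_mono: "wok w \<Longrightarrow> j \<le> j' \<Longrightarrow> bd w m j \<le> bd w m j'"
  unfolding bd_def using cw_mono[of w j j']
  by (intro nat_mono floor_mono mult_left_mono) auto

lemma bd0: "bd w m 0 = 0" unfolding bd_def cw_def by simp

lemma bd5: "wok w \<Longrightarrow> bd w m 5 = m" unfolding bd_def wok_def by simp

lemma sum_const_ivl: "(\<And>u. a \<le> u \<Longrightarrow> u < b \<Longrightarrow> f u = c) \<Longrightarrow> (\<Sum>u\<in>{a..<b}. f u) = real (b - a) * (c::real)"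
  by (simp add: sum.cong[of "{a..<b}" "{a..<b}" f "\<lambda>_. c"])

lemma sum_pt:
  assumes w: "wok w"
  shows "(\<Sum>u<m. g (pt w m u)) = (\<Sum>i<5. real (nn w m i) * (g i :: real))"
proof -
  let ?B = "bd w m"
  have m01: "?B 0 \<le> ?B 1" "?B 1 \<le> ?B 2" "?B 2 \<le> ?B 3" "?B 3 \<le> ?B 4" "?B 4 \<le> ?B 5"
    using bd_mono[OF w] by auto
  have mo: "\<And>j j'. j \<le> j' \<Longrightarrow> ?B j \<le> ?B j'" using bd_mono[OF w] by auto
  have "(\<Sum>u<m. g (pt w m u)) = (\<Sum>u\<in>{?B 0..<?B 5}. g (pt w m u))"
    using bd0 bd5[OF w] by (simp add: lessThan_atLeast0)
  also have "\<dots> = (\<Sum>u\<in>{?B 0..<?B 1}. g (pt w m u)) + (\<Sum>u\<in>{?B 1..<?B 2}. g (pt w m u))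
     + (\<Sum>u\<in>{?B 2..<?B 3}. g (pt w m u)) + (\<Sum>u\<in>{?B 3..<?B 4}. g (pt w m u))
     + (\<Sum>u\<in>{?B 4..<?B 5}. g (pt w m u))"
    using m01 mo[of 0 2] mo[of 0 3] mo[of 0 4]
    by (simp add: sum.atLeastLessThan_concat)
  also have "\<dots> = real (nn w m 0) * g 0 + real (nn w m 1) * g 1 + real (nn w m 2) * g 2
     + real (nn w m 3) * g 3 + real (nn w m 4) * g 4"
  proof -
    have nnk: "nn w m 0 = ?B 1 - ?B 0" "nn w m 1 = ?B 2 - ?B 1" "nn w m 2 = ?B 3 - ?B 2"
      "nn w m 3 = ?B 4 - ?B 3" "nn w m 4 = ?B 5 - ?B 4"
      by (simp_all add: nn_def eval_nat_numeral)
    have "(\<Sum>u\<in>{?B 0..<?B 1}. g (pt w m u)) = real (nn w m 0) * g 0"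
      unfolding nnk by (rule sum_const_ivl) (auto simp: pt_def)
    moreover have "(\<Sum>u\<in>{?B 1..<?B 2}. g (pt w m u)) = real (nn w m 1) * g 1"
      unfolding nnk by (rule sum_const_ivl) (auto simp: pt_def)
    moreover have "(\<Sum>u\<in>{?B 2..<?B 3}. g (pt w m u)) = real (nn w m 2) * g 2"
      unfolding nnk using m01 by (intro sum_const_ivl) (auto simp: pt_def numeral_3_eq_3)
    moreover have "(\<Sum>u\<in>{?B 3..<?B 4}. g (pt w m u)) = real (nn w m 3) * g 3"
      unfolding nnk using m01 mo[of 2 3] mo[of 1 3] by (intro sum_const_ivl) (auto simp: pt_def eval_nat_numeral)
    moreover have "(\<Sum>u\<in>{?B 4..<?B 5}. g (pt w m u)) = real (nn w m 4) * g 4"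
      unfolding nnk using m01 mo[of 2 4] mo[of 1 4] mo[of 3 4] by (intro sum_const_ivl) (auto simp: pt_def eval_nat_numeral)
    ultimately show ?thesis by simp
  qed
  also have "\<dots> = (\<Sum>i<5. real (nn w m i) * g i)"
    by (simp add: eval_nat_numeral)
  finally show ?thesis .
qed


lemma S3_pt:
  assumes w: "wok w"
  shows "S3 m (\<lambda>x y z. F (pt w m x) (pt w m y) (pt w m z)) =
     (\<Sum>i<5. \<Sum>j<5. \<Sum>l<5. real (nn w m i) * real (nn w m j) * real (nn w m l) * F i j l)"
proof -
  have "S3 m (\<lambda>x y z. F (pt w m x) (pt w m y) (pt w m z))
      = (\<Sum>x<m. \<Sum>y<m. \<Sum>l<5. real (nn w m l) * F (pt w m x) (pt w m y) l)"
    unfolding S3_def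
    by (rule sum.cong[OF refl], rule sum.cong[OF refl], rule sum_pt[OF w, where m=m and g="\<lambda>c. F (pt w m _) (pt w m _) c"])
  also have "\<dots> = (\<Sum>x<m. \<Sum>j<5. real (nn w m j) * (\<Sum>l<5. real (nn w m l) * F (pt w m x) j l))"
    by (rule sum.cong[OF refl], rule sum_pt[OF w, where m=m and g="\<lambda>c. \<Sum>l<5. real (nn w m l) * F (pt w m _) c l"])
  also have "\<dots> = (\<Sum>i<5. real (nn w m i) * (\<Sum>j<5. real (nn w m j) * (\<Sum>l<5. real (nn w m l) * F i j l)))"
    by (rule sum_pt[OF w, where m=m and g="\<lambda>c. \<Sum>j<5. real (nn w m j) * (\<Sum>l<5. real (nn w m l) * F c j l)"])
  also have "\<dots> = (\<Sum>i<5. \<Sum>j<5. \<Sum>l<5. real (nn w m i) * real (nn w m j) * real (nn w m l) * F i j l)"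
    by (simp add: sum_distrib_left mult.assoc)
  finally show ?thesis .
qed

definition ecP :: "(nat \<Rightarrow> nat \<Rightarrow> bool) \<Rightarrow> nat \<Rightarrow> nat \<Rightarrow> nat \<Rightarrow> nat" where
  "ecP P i j l = of_bool (P i j) + of_bool (P i l) + of_bool (P j l)"

definition Dn :: "(nat \<Rightarrow> nat \<Rightarrow> bool) \<Rightarrow> (nat \<Rightarrow> real) \<Rightarrow> nat \<Rightarrow> real" where
  "Dn P w k = (\<Sum>i<5. \<Sum>j<5. \<Sum>l<5. w i * w j * w l * of_bool (ecP P i j l = k))"

lemma S3_diff: "S3 m (\<lambda>x y z. F x y z - G x y z) = S3 m F - S3 m G"
  unfolding S3_def by (simp add: sum_subtractf)

lemma S3_eq_count: "S3 m (\<lambda>x y z. of_bool (x = y)) = real m ^ 2"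
  "S3 m (\<lambda>x y z. of_bool (x = z)) = real m ^ 2"
  "S3 m (\<lambda>x y z. of_bool (y = z)) = real m ^ 2"
  unfolding S3_def by (simp_all add: power2_eq_square)

lemma T_U:
  assumes w: "wok w"
  shows "\<bar>T k m (EG P w m) - S3 m (\<lambda>x y z. of_bool (ecP P (pt w m x) (pt w m y) (pt w m z) = k))\<bar>
     \<le> 3 * real m ^ 2"
proof -
  let ?F = "\<lambda>x y z. (of_bool (dst x y z \<and> ec (EG P w m) x y z = k) :: real)"
  let ?G = "\<lambda>x y z. (of_bool (ecP P (pt w m x) (pt w m y) (pt w m z) = k) :: real)"
  let ?B = "\<lambda>x y z. (of_bool (x = y) + of_bool (x = z) + of_bool (y = z) :: real)"
  have pw: "\<bar>?F x y z - ?G x y z\<bar> \<le> ?B x y z" for x y z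
  proof (cases "dst x y z")
    case True
    then have "ec (EG P w m) x y z = ecP P (pt w m x) (pt w m y) (pt w m z)"
      unfolding ec_def ecP_def EG_def dst_def by simp
    then show ?thesis using True by simp
  next
    case False
    then have "1 \<le> ?B x y z" unfolding dst_def by auto
    moreover have "\<bar>?F x y z - ?G x y z\<bar> \<le> 1" by simp
    ultimately show ?thesis by linarith
  qed
  have sB: "S3 m ?B = 3 * real m ^ 2"
    using S3_eq_count by (simp add: S3_add)
  have "T k m (EG P w m) - S3 m ?G = S3 m (\<lambda>x y z. ?F x y z - ?G x y z)"
    unfolding T_def by (simp add: S3_diff)
  moreover have "S3 m (\<lambda>x y z. ?F x y z - ?G x y z) \<le> S3 m ?B"
    using pw by (intro S3_mono) (simp add: abs_le_iff)
  moreover have "- S3 m ?B \<le> S3 m (\<lambda>x y z. ?F x y z - ?G x y z)"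
  proof -
    have "S3 m (\<lambda>x y z. - ?B x y z) \<le> S3 m (\<lambda>x y z. ?F x y z - ?G x y z)"
      apply (intro S3_mono)
      subgoal for x y z using pw[of x y z] unfolding abs_le_iff by linarith
      done
    then show ?thesis using S3_cmult[of m "-1" ?B] by simp
  qed
  ultimately show ?thesis using sB by (simp add: abs_le_iff)
qed

lemma bd_lim:
  assumes w: "wok w"
  shows "(\<lambda>m. real (bd w m j) / real m) \<longlonglongrightarrow> cw w j"
proof (rule tendsto_sandwich)
  let ?c = "cw w j"
  have c0: "0 \<le> ?c" using cw_nonneg[OF w] .
  have rb: "real (bd w m j) = real_of_int \<lfloor>real m * ?c\<rfloor>" for m
    unfolding bd_def using c0 by simp
  show "\<forall>\<^sub>F m in sequentially. ?c - 1 / real m \<le> real (bd w m j) / real m"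
    using eventually_gt_at_top[of 0]
  proof eventually_elim
    case (elim m)
    have "real m * ?c - 1 \<le> real (bd w m j)" unfolding rb by linarith
    then have "(real m * ?c - 1) / real m \<le> real (bd w m j) / real m"
      by (rule divide_right_mono) simp
    then show ?case using elim by (simp add: diff_divide_distrib)
  qed
  show "\<forall>\<^sub>F m in sequentially. real (bd w m j) / real m \<le> ?c"
    using eventually_gt_at_top[of 0]
  proof eventually_elim
    case (elim m)
    have "real (bd w m j) \<le> real m * ?c" unfolding rb by linarith
    then have "real (bd w m j) / real m \<le> real m * ?c / real m"
      by (rule divide_right_mono) simp
    then show ?case using elim by simp
  qed
  show "(\<lambda>m. ?c - 1 / real m) \<longlonglongrightarrow> ?c"
    using tendsto_diff[OF tendsto_const lim_inverse_n', of ?c] by simp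
  show "(\<lambda>m. ?c) \<longlonglongrightarrow> ?c" by simp
qed

lemma nn_lim:
  assumes w: "wok w"
  shows "(\<lambda>m. real (nn w m i) / real m) \<longlonglongrightarrow> w i"
proof -
  have "(\<lambda>m. real (bd w m (Suc i)) / real m - real (bd w m i) / real m) \<longlonglongrightarrow> cw w (Suc i) - cw w i"
    by (intro tendsto_intros bd_lim[OF w])
  moreover have "cw w (Suc i) - cw w i = w i" unfolding cw_def by simp
  moreover have "real (nn w m i) / real m = real (bd w m (Suc i)) / real m - real (bd w m i) / real m" for m
    unfolding nn_def using bd_mono[OF w, of i "Suc i" m] by (simp add: of_nat_diff diff_divide_distrib)
  ultimately show ?thesis by simp
qed

lemma U_lim:
  assumes w: "wok w"
  shows "(\<lambda>m. S3 m (\<lambda>x y z. of_bool (ecP P (pt w m x) (pt w m y) (pt w m z) = k)) / real m ^ 3)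
     \<longlonglongrightarrow> Dn P w k"
proof -
  have eq: "S3 m (\<lambda>x y z. of_bool (ecP P (pt w m x) (pt w m y) (pt w m z) = k)) / real m ^ 3
     = (\<Sum>i<5. \<Sum>j<5. \<Sum>l<5. (real (nn w m i) / real m) * (real (nn w m j) / real m)
          * (real (nn w m l) / real m) * of_bool (ecP P i j l = k))" for m
    unfolding S3_pt[OF w, where F="\<lambda>i j l. of_bool (ecP P i j l = k)"]
    by (simp add: sum_divide_distrib power3_eq_cube del: sum_mult_of_bool_eq)
  show ?thesis unfolding eq Dn_def
    by (intro tendsto_intros nn_lim[OF w])
qed

lemma T_lim:
  assumes w: "wok w"
  shows "(\<lambda>m. T k m (EG P w m) / (real m * (real m - 1) * (real m - 2))) \<longlonglongrightarrow> Dn P w k"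
proof -
  let ?U = "\<lambda>m. S3 m (\<lambda>x y z. of_bool (ecP P (pt w m x) (pt w m y) (pt w m z) = k))"
  let ?P3 = "\<lambda>m::nat. real m * (real m - 1) * (real m - 2)"
  let ?R = "\<lambda>m::nat. inverse ((1 - 1 / real m) * (1 - 2 / real m))"
  have R: "?R \<longlonglongrightarrow> 1"
  proof -
    have "(\<lambda>m. inverse ((1 - 1 / real m) * (1 - 2 * (1 / real m)))) \<longlonglongrightarrow> inverse ((1 - 0) * (1 - 2 * 0))"
      by (intro tendsto_intros lim_inverse_n') simp
    then show ?thesis by simp
  qed
  have Req: "\<forall>\<^sub>F m in sequentially. real m ^ 3 / ?P3 m = ?R m"
    using eventually_ge_at_top[of 3]
  proof eventually_elim
    case (elim m)
    then have m3: "real m \<ge> 3" by simp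
    have "?P3 m = real m ^ 3 * ((1 - 1/real m) * (1 - 2/real m))"
      using m3 by (simp add: field_simps power3_eq_cube)
    then show ?case using m3 by (simp add: divide_inverse)
  qed
  have R2: "(\<lambda>m. real m ^ 3 / ?P3 m) \<longlonglongrightarrow> 1"
    using R tendsto_cong[OF Req] by simp
  have err: "(\<lambda>m. (T k m (EG P w m) - ?U m) / ?P3 m) \<longlonglongrightarrow> 0"
  proof (rule Lim_null_comparison)
    show "\<forall>\<^sub>F m in sequentially. norm ((T k m (EG P w m) - ?U m) / ?P3 m) \<le> 3 * (1 / real m) * (real m ^ 3 / ?P3 m)"
      using eventually_ge_at_top[of 3]
    proof eventually_elim
      case (elim m)
      then have m3: "real m \<ge> 3" by simp
      then have pos: "?P3 m > 0" by simp
      have "norm ((T k m (EG P w m) - ?U m) / ?P3 m) = \<bar>T k m (EG P w m) - ?U m\<bar> / ?P3 m"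
        using pos by simp
      also have "\<dots> \<le> 3 * real m ^ 2 / ?P3 m"
        using T_U[OF w, of k m P] pos by (intro divide_right_mono) auto
      also have "\<dots> = 3 * (1 / real m) * (real m ^ 3 / ?P3 m)"
        using m3 by (simp add: field_simps power2_eq_square power3_eq_cube)
      finally show ?case .
    qed
    show "(\<lambda>m. 3 * (1 / real m) * (real m ^ 3 / ?P3 m)) \<longlonglongrightarrow> 0"
      using tendsto_mult[OF tendsto_mult[OF tendsto_const[of 3] lim_inverse_n'] R2] by simp
  qed
  have main: "(\<lambda>m. (?U m / real m ^ 3) * (real m ^ 3 / ?P3 m) + (T k m (EG P w m) - ?U m) / ?P3 m)
      \<longlonglongrightarrow> Dn P w k * 1 + 0"
    by (intro tendsto_add tendsto_mult U_lim[OF w] R2 err)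
  have eq: "\<forall>\<^sub>F m in sequentially. (?U m / real m ^ 3) * (real m ^ 3 / ?P3 m) + (T k m (EG P w m) - ?U m) / ?P3 m
      = T k m (EG P w m) / ?P3 m"
    using eventually_ge_at_top[of 3]
  proof eventually_elim
    case (elim m)
    then have "real m \<ge> 3" by simp
    then have "(?U m / real m ^ 3) * (real m ^ 3 / ?P3 m) = ?U m / ?P3 m" by simp
    then show ?case by (simp only: add_divide_distrib[symmetric]) simp
  qed
  show ?thesis using main tendsto_cong[OF eq] by simp
qed


lemma EG_simple: "(\<And>i j. P i j = P j i) \<Longrightarrow> simple_graph (EG P w m)"
  unfolding simple_graph_def EG_def by auto

lemma blowup_in_S:
  assumes w: "wok w" and Psym: "\<And>i j. P i j = P j i"
  shows "(Dn P w 0, Dn P w 1, Dn P w 2, Dn P w 3) \<in> S_set"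
proof -
  have lim: "(\<lambda>m. ind_density (Hk k) 3 m (EG P w m)) \<longlonglongrightarrow> Dn P w k" if "k \<le> 3" for k
    using T_lim[OF w, of k P] density_eq[OF EG_simple[OF Psym] that] by simp
  have ev: "\<forall>\<^sub>F m in sequentially. \<bar>ind_density (Hk k) 3 m (EG P w m) - Dn P w k\<bar> \<le> \<epsilon>"
    if "k \<le> 3" "\<epsilon> > 0" for k \<epsilon>
  proof -
    have "\<forall>\<^sub>F m in sequentially. dist (ind_density (Hk k) 3 m (EG P w m)) (Dn P w k) < \<epsilon>"
      using lim[OF that(1)] that(2) by (simp add: tendsto_iff)
    then show ?thesis by (rule eventually_mono) (simp add: dist_real_def)
  qed
  show ?thesis unfolding S_set_def mem_Collect_eq prod.case
  proof (intro allI impI)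
    fix \<epsilon> :: real and n :: nat assume e: "\<epsilon> > 0"
    have "\<forall>\<^sub>F m in sequentially. n \<le> m \<and>
        \<bar>ind_density (Hk 0) 3 m (EG P w m) - Dn P w 0\<bar> \<le> \<epsilon> \<and>
        \<bar>ind_density (Hk 1) 3 m (EG P w m) - Dn P w 1\<bar> \<le> \<epsilon> \<and>
        \<bar>ind_density (Hk 2) 3 m (EG P w m) - Dn P w 2\<bar> \<le> \<epsilon> \<and>
        \<bar>ind_density (Hk 3) 3 m (EG P w m) - Dn P w 3\<bar> \<le> \<epsilon>"
    proof -
      have e0: "\<forall>\<^sub>F m in sequentially. \<bar>ind_density (Hk 0) 3 m (EG P w m) - Dn P w 0\<bar> \<le> \<epsilon>"
        by (rule ev) (simp_all add: e)
      have e1: "\<forall>\<^sub>F m in sequentially. \<bar>ind_density (Hk 1) 3 m (EG P w m) - Dn P w 1\<bar> \<le> \<epsilon>"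
        by (rule ev) (simp_all add: e)
      have e2: "\<forall>\<^sub>F m in sequentially. \<bar>ind_density (Hk 2) 3 m (EG P w m) - Dn P w 2\<bar> \<le> \<epsilon>"
        by (rule ev) (simp_all add: e)
      have e3: "\<forall>\<^sub>F m in sequentially. \<bar>ind_density (Hk 3) 3 m (EG P w m) - Dn P w 3\<bar> \<le> \<epsilon>"
        by (rule ev) (simp_all add: e)
      show ?thesis
        using eventually_conj[OF eventually_ge_at_top[of n] eventually_conj[OF e0 eventually_conj[OF e1 eventually_conj[OF e2 e3]]]] .
    qed
    then obtain N where N: "\<forall>m\<ge>N. n \<le> m \<and>
        \<bar>ind_density (Hk 0) 3 m (EG P w m) - Dn P w 0\<bar> \<le> \<epsilon> \<and>
        \<bar>ind_density (Hk 1) 3 m (EG P w m) - Dn P w 1\<bar> \<le> \<epsilon> \<and>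
        \<bar>ind_density (Hk 2) 3 m (EG P w m) - Dn P w 2\<bar> \<le> \<epsilon> \<and>
        \<bar>ind_density (Hk 3) 3 m (EG P w m) - Dn P w 3\<bar> \<le> \<epsilon>"
      unfolding eventually_sequentially by blast
    show "\<exists>m E. m \<ge> n \<and> simple_graph E \<and>
        \<bar>ind_density (Hk 0) 3 m E - Dn P w 0\<bar> \<le> \<epsilon> \<and>
        \<bar>ind_density (Hk 1) 3 m E - Dn P w 1\<bar> \<le> \<epsilon> \<and>
        \<bar>ind_density (Hk 2) 3 m E - Dn P w 2\<bar> \<le> \<epsilon> \<and>
        \<bar>ind_density (Hk 3) 3 m E - Dn P w 3\<bar> \<le> \<epsilon>"
    proof -
      have HN: "n \<le> N \<and>
        \<bar>ind_density (Hk 0) 3 N (EG P w N) - Dn P w 0\<bar> \<le> \<epsilon> \<and>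
        \<bar>ind_density (Hk 1) 3 N (EG P w N) - Dn P w 1\<bar> \<le> \<epsilon> \<and>
        \<bar>ind_density (Hk 2) 3 N (EG P w N) - Dn P w 2\<bar> \<le> \<epsilon> \<and>
        \<bar>ind_density (Hk 3) 3 N (EG P w N) - Dn P w 3\<bar> \<le> \<epsilon>" using N by blast
      show ?thesis
        apply (rule exI[of _ N], rule exI[of _ "EG P w N"])
        using HN EG_simple[OF Psym, where w=w and m=N] by simp
    qed
  qed
qed

lemma dens_nonneg: "ind_density H k m E \<ge> 0"
  unfolding ind_density_def by simp

lemma dens12_bound:
  assumes sg: "simple_graph E" and m: "m \<ge> 3"
  shows "ind_density (Hk 1) 3 m E + ind_density (Hk 2) 3 m E \<le> 3/4 + (3/4) / (real m - 2)"
proof -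
  let ?P3 = "real m * (real m - 1) * (real m - 2)"
  have m3: "real m \<ge> 3" using m by simp
  then have pos: "?P3 > 0" by simp
  have "ind_density (Hk 1) 3 m E + ind_density (Hk 2) 3 m E = (T 1 m E + T 2 m E) / ?P3"
    using density_eq[OF sg, of 1 m] density_eq[OF sg, of 2 m] by (simp add: add_divide_distrib)
  also have "\<dots> \<le> (3/4 * real m * (real m - 1)^2) / ?P3"
    using upper_T[OF sg, of m] pos by (intro divide_right_mono) auto
  also have "\<dots> = 3/4 + (3/4) / (real m - 2)"
  proof -
    have a: "real m \<noteq> 0" "real m - 1 \<noteq> 0" "real m - 2 \<noteq> 0" using m3 by auto
    have "(3/4 * real m * (real m - 1)^2) / ?P3 = (3/4) * (real m - 1) / (real m - 2)"
      using a by (simp add: power2_eq_square)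
    also have "\<dots> = 3/4 + (3/4) / (real m - 2)"
      using a by (simp add: field_simps)
    finally show ?thesis .
  qed
  finally show ?thesis .
qed

lemma S12_sub:
  assumes "(d1, d2) \<in> S12"
  shows "d1 \<ge> 0 \<and> d2 \<ge> 0 \<and> d1 + d2 \<le> 3/4"
proof -
  obtain d0 d3 where S: "(d0, d1, d2, d3) \<in> S_set"
    using assms unfolding S12_def by auto
  have H: "\<exists>m E. m \<ge> n \<and> simple_graph E \<and>
      \<bar>ind_density (Hk 0) 3 m E - d0\<bar> \<le> \<epsilon> \<and>
      \<bar>ind_density (Hk 1) 3 m E - d1\<bar> \<le> \<epsilon> \<and>
      \<bar>ind_density (Hk 2) 3 m E - d2\<bar> \<le> \<epsilon> \<and>
      \<bar>ind_density (Hk 3) 3 m E - d3\<bar> \<le> \<epsilon>" if "\<epsilon> > 0" for \<epsilon> n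
    using S that unfolding S_set_def mem_Collect_eq prod.case by blast
  have a1: "d1 \<ge> 0"
  proof (rule ccontr)
    assume "\<not> d1 \<ge> 0"
    then obtain m E where "\<bar>ind_density (Hk 1) 3 m E - d1\<bar> \<le> - d1 / 2"
      using H[of "- d1 / 2" 0] by auto
    then show False using dens_nonneg[of "Hk 1" 3 m E] \<open>\<not> d1 \<ge> 0\<close> by linarith
  qed
  have a2: "d2 \<ge> 0"
  proof (rule ccontr)
    assume "\<not> d2 \<ge> 0"
    then obtain m E where "\<bar>ind_density (Hk 2) 3 m E - d2\<bar> \<le> - d2 / 2"
      using H[of "- d2 / 2" 0] by auto
    then show False using dens_nonneg[of "Hk 2" 3 m E] \<open>\<not> d2 \<ge> 0\<close> by linarith
  qed
  have a3: "d1 + d2 \<le> 3/4"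
  proof (rule ccontr)
    assume "\<not> d1 + d2 \<le> 3/4"
    define \<delta> where "\<delta> = d1 + d2 - 3/4"
    have dp: "\<delta> > 0" using \<open>\<not> d1 + d2 \<le> 3/4\<close> unfolding \<delta>_def by simp
    define n where "n = nat \<lceil>3 / \<delta>\<rceil> + 3"
    obtain m E where mn: "m \<ge> n" and sg: "simple_graph E"
      and c1: "\<bar>ind_density (Hk 1) 3 m E - d1\<bar> \<le> \<delta>/4"
      and c2: "\<bar>ind_density (Hk 2) 3 m E - d2\<bar> \<le> \<delta>/4"
      using H[of "\<delta>/4" n] dp by auto
    have m3: "m \<ge> 3" using mn unfolding n_def by simp
    have "real m \<ge> real n" using mn by simp
    moreover have "real n \<ge> 3 / \<delta> + 3" unfolding n_def
      using real_nat_ceiling_ge[of "3 / \<delta>"] by simp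
    ultimately have mb: "real m - 2 \<ge> 3 / \<delta> + 1" by simp
    then have "\<delta> * (real m - 2) \<ge> \<delta> * (3 / \<delta> + 1)" using dp by (intro mult_left_mono) auto
    moreover have "\<delta> * (3 / \<delta> + 1) = 3 + \<delta>" using dp by (simp add: field_simps)
    ultimately have "\<delta> * (real m - 2) \<ge> 3 + \<delta>" by linarith
    then have l3: "3 < \<delta> * (real m - 2)" using dp by linarith
    have xpos: "real m - 2 > 0" using mb dp by (smt (verit) divide_pos_pos)
    have "3 / (real m - 2) < \<delta>" using l3 xpos by (simp add: divide_less_eq mult.commute)
    moreover have "(3/4) / (real m - 2) = (3 / (real m - 2)) / 4" by simp
    ultimately have q: "(3/4) / (real m - 2) < \<delta> / 4" by linarith
    have "ind_density (Hk 1) 3 m E + ind_density (Hk 2) 3 m E \<le> 3/4 + (3/4) / (real m - 2)"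
      by (rule dens12_bound[OF sg m3])
    moreover have "- (ind_density (Hk 1) 3 m E - d1) \<le> \<delta>/4" by (rule abs_le_D2[OF c1])
    moreover have "- (ind_density (Hk 2) 3 m E - d2) \<le> \<delta>/4" by (rule abs_le_D2[OF c2])
    ultimately show False using q dp \<delta>_def by linarith
  qed
  show ?thesis using a1 a2 a3 by simp
qed


definition P5 :: "nat \<Rightarrow> nat \<Rightarrow> bool" where
  "P5 i j \<longleftrightarrow> (let a = min i j; b = max i j in
     (a = b \<and> a \<le> 2) \<or> (a = 0 \<and> (b = 1 \<or> b = 3 \<or> b = 4)) \<or> (a = 1 \<and> b = 3) \<or> (a = 2 \<and> b = 4) \<or> (a = 3 \<and> b = 4))"

lemma P5_sym: "P5 i j = P5 j i"
  unfolding P5_def by (simp add: min.commute max.commute)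

definition wt :: "real \<Rightarrow> real \<Rightarrow> nat \<Rightarrow> real" where
  "wt u v i = (if i = 0 then 1 - u else if i \<le> 2 then u * v / 2 else u * (1 - v) / 2)"

lemma wt_ok: "0 \<le> u \<Longrightarrow> u \<le> 1 \<Longrightarrow> 0 \<le> v \<Longrightarrow> v \<le> 1 \<Longrightarrow> wok (wt u v)"
  unfolding wok_def
proof (intro conjI allI)
  fix i assume "0 \<le> u" "u \<le> 1" "0 \<le> v" "v \<le> 1"
  then show "0 \<le> wt u v i" unfolding wt_def by auto
next
  show "cw (wt u v) 5 = 1" unfolding cw_def wt_def by (simp add: numeral_eq_Suc lessThan_Suc algebra_simps)
qed

lemma wt0: "wt u v 0 = 1 - u" "wt u v 1 = u * v / 2" "wt u v (Suc 0) = u * v / 2" "wt u v 2 = u * v / 2"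
  "wt u v 3 = u * (1 - v) / 2" "wt u v 4 = u * (1 - v) / 2"
  unfolding wt_def by auto

lemma Dn_expand: "Dn P w k = (\<Sum>i\<in>{0,1,2,3,4}. \<Sum>j\<in>{0,1,2,3,4}. \<Sum>l\<in>{0,1,2,3,4}. w i * w j * w l * of_bool (ecP P i j l = k))"
proof -
  have "{..<5::nat} = {0,1,2,3,4}" by auto
  then show ?thesis unfolding Dn_def by simp
qed

lemma D1_eq: "Dn P5 (wt u v) 1 = 3/2*u * v - 3/2*(u^2) * v + 3/4*(u^2) * (v^2) + 3/2*(u^3) * (v^2) - 3/2*(u^3) * (v^3)"
  unfolding Dn_expand
  by (simp add: wt0 ecP_def P5_def del: sum_mult_of_bool_eq sum_of_bool_mult_eq)
    (simp add: field_simps power2_eq_square power3_eq_cube)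

lemma D2_eq: "Dn P5 (wt u v) 2 = 3/2*(u^2) - 3/2*(u^2) * (v^2) - 3/4*(u^3) - 3/4*(u^3) * (v^2) + 3/2*(u^3) * (v^3)"
  unfolding Dn_expand
  by (simp add: wt0 ecP_def P5_def del: sum_mult_of_bool_eq sum_of_bool_mult_eq)
    (simp add: field_simps power2_eq_square power3_eq_cube)


lemma Dn_nonneg: "wok w \<Longrightarrow> 0 \<le> Dn P w k"
  unfolding Dn_def wok_def by (intro sum_nonneg mult_nonneg_nonneg) auto

lemma clamp_fix:
  assumes "0 \<le> u" "u \<le> (1::real)" "max 0 (min 1 (u - g)) = u"
    "u = 0 \<Longrightarrow> g \<le> 0" "u = 1 \<Longrightarrow> 0 \<le> g"
  shows "g = 0"
  using assms by (auto simp: max_def min_def split: if_splits)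

lemma PM:
  fixes G1 G2 :: "real \<Rightarrow> real \<Rightarrow> real"
  assumes c1: "continuous_on ({0..1} \<times> {0..1}) (\<lambda>p. G1 (fst p) (snd p))"
    and c2: "continuous_on ({0..1} \<times> {0..1}) (\<lambda>p. G2 (fst p) (snd p))"
    and b1: "\<And>v. 0 \<le> v \<Longrightarrow> v \<le> 1 \<Longrightarrow> G1 0 v \<le> 0"
    and b2: "\<And>v. 0 \<le> v \<Longrightarrow> v \<le> 1 \<Longrightarrow> G1 1 v \<ge> 0"
    and b3: "\<And>u. 0 \<le> u \<Longrightarrow> u \<le> 1 \<Longrightarrow> G2 u 0 \<le> 0"
    and b4: "\<And>u. 0 \<le> u \<Longrightarrow> u \<le> 1 \<Longrightarrow> G2 u 1 \<ge> 0"
  shows "\<exists>u v. 0 \<le> u \<and> u \<le> 1 \<and> 0 \<le> v \<and> v \<le> 1 \<and> G1 u v = 0 \<and> G2 u v = 0"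
proof -
  let ?S = "{0..1::real} \<times> {0..1::real}"
  let ?cl = "\<lambda>x::real. max 0 (min 1 x)"
  define f where "f = (\<lambda>p::real \<times> real. (?cl (fst p - G1 (fst p) (snd p)), ?cl (snd p - G2 (fst p) (snd p))))"
  have "continuous_on ?S f"
    unfolding f_def
    by (intro continuous_on_Pair continuous_on_max continuous_on_min continuous_on_diff
        continuous_on_const continuous_on_fst continuous_on_snd continuous_on_id c1 c2)
  moreover have "f \<in> ?S \<rightarrow> ?S" unfolding f_def by auto
  moreover have "compact ?S" by (intro compact_Times compact_Icc)
  moreover have "convex ?S" by (intro convex_Times convex_real_interval)
  moreover have "?S \<noteq> {}" by auto
  ultimately obtain p where p: "p \<in> ?S" "f p = p"
    using brouwer[of ?S f] by blast
  obtain u v where uv: "p = (u, v)" by (cases p)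
  have u: "0 \<le> u" "u \<le> 1" and v: "0 \<le> v" "v \<le> 1" using p(1) uv by auto
  have fu: "?cl (u - G1 u v) = u" and fv: "?cl (v - G2 u v) = v"
    using p(2) uv unfolding f_def by auto
  have "G1 u v = 0"
    by (rule clamp_fix[OF u fu]) (use b1 b2 v in auto)
  moreover have "G2 u v = 0"
    by (rule clamp_fix[OF v fv]) (use b3 b4 u in auto)
  ultimately show ?thesis using u v by blast
qed

lemma realize:
  assumes t1: "0 \<le> t1" and t2: "0 \<le> t2" and q: "t1 + t2 \<le> 3/4"
  shows "\<exists>u v. 0 \<le> u \<and> u \<le> 1 \<and> 0 \<le> v \<and> v \<le> 1 \<and> Dn P5 (wt u v) 1 = t1 \<and> Dn P5 (wt u v) 2 = t2"
proof -
  define q where "q = t1 + t2"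
  define f1 where "f1 = (\<lambda>u v::real. 3/2*u * v - 3/2*(u^2) * v + 3/4*(u^2) * (v^2) + 3/2*(u^3) * (v^2) - 3/2*(u^3) * (v^3))"
  define f2 where "f2 = (\<lambda>u v::real. 3/2*(u^2) - 3/2*(u^2) * (v^2) - 3/4*(u^3) - 3/4*(u^3) * (v^2) + 3/2*(u^3) * (v^3))"
  have F1: "Dn P5 (wt u v) 1 = f1 u v" for u v unfolding f1_def by (rule D1_eq)
  have F2: "Dn P5 (wt u v) 2 = f2 u v" for u v unfolding f2_def by (rule D2_eq)
  have n1: "0 \<le> f1 u v" "0 \<le> f2 u v" if "0 \<le> u" "u \<le> 1" "0 \<le> v" "v \<le> 1" for u v
    using Dn_nonneg[OF wt_ok[OF that], of P5 1] Dn_nonneg[OF wt_ok[OF that], of P5 2] F1 F2 by auto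
  define G1 where "G1 = (\<lambda>u v. f1 u v + f2 u v - q)"
  define G2 where "G2 = (\<lambda>u v. q * f1 u v - t1 * (f1 u v + f2 u v))"
  have "\<exists>u v. 0 \<le> u \<and> u \<le> 1 \<and> 0 \<le> v \<and> v \<le> 1 \<and> G1 u v = 0 \<and> G2 u v = 0"
  proof (rule PM)
    show "continuous_on ({0..1} \<times> {0..1}) (\<lambda>p. G1 (fst p) (snd p))"
      unfolding G1_def f1_def f2_def by (intro continuous_intros)
    show "continuous_on ({0..1} \<times> {0..1}) (\<lambda>p. G2 (fst p) (snd p))"
      unfolding G2_def f1_def f2_def by (intro continuous_intros)
    show "G1 0 v \<le> 0" for v unfolding G1_def f1_def f2_def q_def using t1 t2 by simp
    show "G1 1 v \<ge> 0" for v unfolding G1_def f1_def f2_def q_def using q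
      by (simp add: algebra_simps power2_eq_square power3_eq_cube)
    show "G2 u 0 \<le> 0" if "0 \<le> u" "u \<le> 1" for u
    proof -
      have "f1 u 0 = 0" unfolding f1_def by simp
      moreover have "0 \<le> f2 u 0" using n1[OF that] by simp
      ultimately show ?thesis unfolding G2_def using t1 by (simp add: mult_nonneg_nonneg)
    qed
    show "G2 u 1 \<ge> 0" if "0 \<le> u" "u \<le> 1" for u
    proof -
      have "f2 u 1 = 0" unfolding f2_def by simp
      moreover have "0 \<le> f1 u 1" using n1[OF that] by simp
      ultimately show ?thesis unfolding G2_def q_def using t2 by (simp add: algebra_simps)
    qed
  qed
  then obtain u v where uv: "0 \<le> u" "u \<le> 1" "0 \<le> v" "v \<le> 1" and g1: "G1 u v = 0" and g2: "G2 u v = 0"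
    by blast
  have s: "f1 u v + f2 u v = q" using g1 unfolding G1_def by simp
  have "f1 u v = t1 \<and> f2 u v = t2"
  proof (cases "q = 0")
    case True
    then show ?thesis using s n1[OF uv] t1 t2 unfolding q_def by linarith
  next
    case False
    have "q * f1 u v = t1 * q" using g2 s unfolding G2_def by (simp add: mult.commute)
    then have "f1 u v = t1" using False by simp
    then show ?thesis using s unfolding q_def by simp
  qed
  then show ?thesis using uv F1 F2 by auto
qed

theorem theorem13:
  shows "S12 = {(d1, d2). d1 \<ge> 0 \<and> d2 \<ge> 0 \<and> d1 + d2 \<le> 3/4}"
proof
  show "S12 \<subseteq> {(d1, d2). d1 \<ge> 0 \<and> d2 \<ge> 0 \<and> d1 + d2 \<le> 3/4}"
    using S12_sub by auto
next
  show "{(d1, d2). d1 \<ge> 0 \<and> d2 \<ge> 0 \<and> d1 + d2 \<le> 3/4} \<subseteq> S12"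
  proof clarify
    fix t1 t2 :: real assume h: "0 \<le> t1" "0 \<le> t2" "t1 + t2 \<le> 3/4"
    obtain u v where uv: "0 \<le> u" "u \<le> 1" "0 \<le> v" "v \<le> 1"
      and d: "Dn P5 (wt u v) 1 = t1" "Dn P5 (wt u v) 2 = t2"
      using realize[OF h] by blast
    have "(Dn P5 (wt u v) 0, Dn P5 (wt u v) 1, Dn P5 (wt u v) 2, Dn P5 (wt u v) 3) \<in> S_set"
      by (rule blowup_in_S[OF wt_ok[OF uv] P5_sym])
    then show "(t1, t2) \<in> S12" unfolding S12_def using d by auto
  qed
qed

end
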